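(* Let $\gamma>0$, $s>0$, $D_2=\partial/\partial v$, and $G(u,v;s)=(u^2+v^2)^{-s}$ for $(u,v)\in\mathbb{R}^2\setminus\{(0,0)\}$. If $u\ge\gamma$ and $v\in\mathbb{R}$, then $$\frac{|D_2G(u,v;s)|}{G(u,v;s)}\le\frac{s}{\gamma},\qquad -\frac{2s}{\gamma^2}\le\frac{D_2^2G(u,v;s)}{G(u,v;s)}\le\frac{2s(2s+1)}{4\gamma^2},$$ $$\frac{|D_2^3G(u,v;s)|}{G(u,v;s)}\le\frac{2s(2s+2)}{\gamma^3}\max\Big\{\frac{25\sqrt5}{72},\frac{2s+1}{8}\Big\},$$ $$-\frac{2s(s+1)(2s+2)\cdot3}{\gamma^4}\le\frac{D_2^4G(u,v;s)}{G(u,v;s)}\le\frac{2s(2s+1)(2s+2)(2s+3)}{\gamma^4}.$$ *)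

theory Defs
  imports "HOL-Analysis.Analysis"
begin

definition G :: "real \<Rightarrow> real \<Rightarrow> real \<Rightarrow> real" where
  "G u v s = (u\<^sup>2 + v\<^sup>2) powr (-s)"

definition D2 :: "nat \<Rightarrow> real \<Rightarrow> real \<Rightarrow> real \<Rightarrow> real" where
  "D2 k u v s = (deriv ^^ k) (\<lambda>w. G u w s) v"

end

theory Submission
  imports Defs
begin

lemma Qpos: "(u::real) \<noteq> 0 \<Longrightarrow> 0 < u^2 + w^2"
  by (simp add: add_pos_nonneg)

lemma dQ: assumes "(u::real) \<noteq> 0"
  shows "((\<lambda>w. (u^2+w^2) powr r) has_real_derivative (r * (u^2+w^2) powr (r-1) * (2 * w))) (at w)"
proof -
  have "((\<lambda>w. u^2+w^2) has_real_derivative 2 * w) (at w)"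
    by (auto intro!: derivative_eq_intros)
  from DERIV_fun_powr[OF this Qpos[OF assms], of r] show ?thesis by simp
qed

lemma dterm: assumes "(u::real) \<noteq> 0"
  shows "((\<lambda>w. c * w^n * (u^2+w^2) powr r) has_real_derivative
     (c * real n * w^(n-Suc 0) * (u^2+w^2) powr r + 2 * c * r * w^(n+1) * (u^2+w^2) powr (r-1))) (at w)"
proof -
  have "((\<lambda>w. w^n * (u^2+w^2) powr r) has_real_derivative
     (real n * w^(n-Suc 0) * (u^2+w^2) powr r + r * (u^2+w^2) powr (r-1) * (2 * w) * w^n)) (at w)"
    using DERIV_mult[OF DERIV_pow[of n w] dQ[OF assms, where r=r and w=w]] by simp
  then have "((\<lambda>w. c * (w^n * (u^2+w^2) powr r)) has_real_derivative
     c * (real n * w^(n-Suc 0) * (u^2+w^2) powr r + r * (u^2+w^2) powr (r-1) * (2 * w) * w^n)) (at w)"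
    by (rule DERIV_cmult)
  then have X: "((\<lambda>w. c * w^n * (u^2+w^2) powr r) has_real_derivative
     c * (real n * w^(n-Suc 0) * (u^2+w^2) powr r + r * (u^2+w^2) powr (r-1) * (2 * w) * w^n)) (at w)"
    by (simp only: mult.assoc)
  show ?thesis
    by (rule DERIV_cong[OF X]) (simp add: algebra_simps power_add)
qed

lemma fle: "0 < (q::real) \<Longrightarrow> 0 < p \<Longrightarrow> x * p \<le> y * q \<Longrightarrow> x/q \<le> y/p"
  by (simp add: field_simps)

lemma fun4: "(f^^4) g = f (f (f (f g)))" and fun3: "(f^^3) g = f (f (f g))"
  and fun2: "(f^^2) g = f (f g)" and fun1: "(f^^1) g = f g"
  by (simp_all add: numeral_eq_Suc)

lemma D2_vals: assumes u: "(u::real) \<noteq> 0"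
  shows "D2 1 u v s = ( -2 * s) * v^1 * (u^2+v^2) powr (-s-1)"
    and "D2 2 u v s = ( -2 * s) * v^0 * (u^2+v^2) powr (-s-1) + (4 * s * (s+1)) * v^2 * (u^2+v^2) powr (-s-1-1)"
    and "D2 3 u v s = (12 * s * (s+1)) * v^1 * (u^2+v^2) powr (-s-1-1) + ( -8 * s * (s+1) * (s+2)) * v^3 * (u^2+v^2) powr (-s-1-1-1)"
    and "D2 4 u v s = (12 * s * (s+1)) * v^0 * (u^2+v^2) powr (-s-1-1) + ( -48 * s * (s+1) * (s+2)) * v^2 * (u^2+v^2) powr (-s-1-1-1)
            + (16 * s * (s+1) * (s+2) * (s+3)) * v^4 * (u^2+v^2) powr (-s-1-1-1-1)"
proof -
  have e0: "(\<lambda>w. G u w s) = (\<lambda>w. 1 * w^0 * (u^2+w^2) powr (-s))"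
    by (simp add: G_def)
  have e1: "deriv (\<lambda>w. 1 * w^0 * (u^2+w^2) powr (-s)) = (\<lambda>w. ( -2 * s) * w^1 * (u^2+w^2) powr (-s-1))"
    apply (rule ext, rule DERIV_imp_deriv, rule DERIV_cong[OF dterm[OF u]])
    by (simp add: algebra_simps eval_nat_numeral)
  have e2: "deriv (\<lambda>w. ( -2 * s) * w^1 * (u^2+w^2) powr (-s-1)) =
     (\<lambda>w. ( -2 * s) * w^0 * (u^2+w^2) powr (-s-1) + (4 * s * (s+1)) * w^2 * (u^2+w^2) powr (-s-1-1))"
    apply (rule ext, rule DERIV_imp_deriv, rule DERIV_cong[OF dterm[OF u]])
    by (simp add: algebra_simps eval_nat_numeral)
  have e3: "deriv (\<lambda>w. ( -2 * s) * w^0 * (u^2+w^2) powr (-s-1) + (4 * s * (s+1)) * w^2 * (u^2+w^2) powr (-s-1-1)) =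
     (\<lambda>w. (12 * s * (s+1)) * w^1 * (u^2+w^2) powr (-s-1-1) + ( -8 * s * (s+1) * (s+2)) * w^3 * (u^2+w^2) powr (-s-1-1-1))"
    apply (rule ext, rule DERIV_imp_deriv, rule DERIV_cong[OF DERIV_add[OF dterm[OF u] dterm[OF u]]])
    by (simp add: algebra_simps eval_nat_numeral)
  have e4: "deriv (\<lambda>w. (12 * s * (s+1)) * w^1 * (u^2+w^2) powr (-s-1-1) + ( -8 * s * (s+1) * (s+2)) * w^3 * (u^2+w^2) powr (-s-1-1-1)) =
     (\<lambda>w. (12 * s * (s+1)) * w^0 * (u^2+w^2) powr (-s-1-1) + ( -48 * s * (s+1) * (s+2)) * w^2 * (u^2+w^2) powr (-s-1-1-1)
            + (16 * s * (s+1) * (s+2) * (s+3)) * w^4 * (u^2+w^2) powr (-s-1-1-1-1))"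
    apply (rule ext, rule DERIV_imp_deriv, rule DERIV_cong[OF DERIV_add[OF dterm[OF u] dterm[OF u]]])
    by (simp add: algebra_simps eval_nat_numeral)
  show "D2 1 u v s = ( -2 * s) * v^1 * (u^2+v^2) powr (-s-1)"
    unfolding D2_def fun1 e0 e1 by (rule refl)
  show "D2 2 u v s = ( -2 * s) * v^0 * (u^2+v^2) powr (-s-1) + (4 * s * (s+1)) * v^2 * (u^2+v^2) powr (-s-1-1)"
    unfolding D2_def fun2 e0 e1 e2 by (rule refl)
  show "D2 3 u v s = (12 * s * (s+1)) * v^1 * (u^2+v^2) powr (-s-1-1) + ( -8 * s * (s+1) * (s+2)) * v^3 * (u^2+v^2) powr (-s-1-1-1)"
    unfolding D2_def fun3 e0 e1 e2 e3 by (rule refl)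
  show "D2 4 u v s = (12 * s * (s+1)) * v^0 * (u^2+v^2) powr (-s-1-1) + ( -48 * s * (s+1) * (s+2)) * v^2 * (u^2+v^2) powr (-s-1-1-1)
            + (16 * s * (s+1) * (s+2) * (s+3)) * v^4 * (u^2+v^2) powr (-s-1-1-1-1)"
    unfolding D2_def fun4 e0 e1 e2 e3 e4 by (rule refl)
qed

lemma ratios: fixes u v s :: real assumes u: "u \<noteq> 0"
  defines "Q \<equiv> u^2+v^2"
  shows "D2 1 u v s / G u v s = -2 * s * v/Q"
    and "D2 2 u v s / G u v s = (-2 * s * Q + 4 * s * (s+1) * v^2)/Q^2"
    and "D2 3 u v s / G u v s = (12 * s * (s+1) * v * Q - 8 * s * (s+1) * (s+2) * v^3)/Q^3"
    and "D2 4 u v s / G u v s = (12 * s * (s+1) * Q^2 - 48 * s * (s+1) * (s+2) * v^2 * Q + 16 * s * (s+1) * (s+2) * (s+3) * v^4)/Q^4"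
proof -
  have Q: "0 < Q" using Qpos[OF u] by (simp add: Q_def)
  have P: "0 < Q powr (-s)" using Q by simp
  have Q1: "Q powr 1 = Q" using Q by (simp add: powr_one)
  note vals = D2_vals[OF u, of v s, folded Q_def]
  have G: "G u v s = Q powr (-s)" by (simp add: G_def Q_def)
  show "D2 1 u v s / G u v s = -2 * s * v/Q"
    unfolding vals G using P Q by (simp only: powr_diff Q1) (simp add: field_simps)
  show "D2 2 u v s / G u v s = (-2 * s * Q + 4 * s * (s+1) * v^2)/Q^2"
    unfolding vals G using P Q by (simp only: powr_diff Q1) (simp add: field_simps power2_eq_square)
  show "D2 3 u v s / G u v s = (12 * s * (s+1) * v * Q - 8 * s * (s+1) * (s+2) * v^3)/Q^3"
    unfolding vals G using P Q by (simp only: powr_diff Q1) (simp add: field_simps power2_eq_square power3_eq_cube)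
  show "D2 4 u v s / G u v s = (12 * s * (s+1) * Q^2 - 48 * s * (s+1) * (s+2) * v^2 * Q + 16 * s * (s+1) * (s+2) * (s+3) * v^4)/Q^4"
    unfolding vals G using P Q by (simp only: powr_diff Q1) (simp add: field_simps power2_eq_square power3_eq_cube eval_nat_numeral)
qed


lemma key2: fixes u v :: real shows "2 * \<bar>v\<bar> * u \<le> u^2 + v^2"
proof -
  have "0 \<le> (u - \<bar>v\<bar>)^2" by simp
  then show ?thesis by (simp add: power2_diff algebra_simps)
qed

lemma amgm: fixes x y :: real assumes "0 \<le> x" "0 \<le> y"
  shows "46656 * x * y^5 \<le> 3125 * (x+y)^6"
proof -
  have id: "3125 * (x+y)^6 - 46656 * x * y^5 = (5 * x - y)^2 * (125 * x^4 + 800 * x^3 * y + 2190 * x^2 * y^2 + 3344 * x * y^3 + 3125 * y^4)"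
    by algebra
  have "0 \<le> (5 * x - y)^2 * (125 * x^4 + 800 * x^3 * y + 2190 * x^2 * y^2 + 3344 * x * y^3 + 3125 * y^4)"
    using assms by (intro mult_nonneg_nonneg add_nonneg_nonneg) auto
  then show ?thesis using id by linarith
qed

lemma ineq1: fixes g s u v :: real assumes g: "0 < g" "g \<le> u" and s: "0 < s"
  shows "\<bar>-2 * s * v / (u^2+v^2)\<bar> \<le> s / g"
proof -
  have u: "0 < u" using g by simp
  have Q: "0 < u^2+v^2" using u by (simp add: add_pos_nonneg)
  have "\<bar>-2 * s * v / (u^2+v^2)\<bar> = 2 * s * \<bar>v\<bar> / (u^2+v^2)" using s Q by (simp add: abs_mult)
  also have "\<dots> \<le> s / u"
  proof (rule fle[OF Q u])
    have "s * (2 * \<bar>v\<bar> * u) \<le> s * (u^2+v^2)" by (rule mult_left_mono[OF key2]) (use s in simp)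
    then show "2 * s * \<bar>v\<bar> * u \<le> s * (u^2+v^2)" by (simp add: algebra_simps)
  qed
  also have "s / u \<le> s / g" using g s by (intro divide_left_mono) auto
  finally show ?thesis .
qed

lemma ineq2: fixes g s u v Q :: real assumes g: "0 < g" "g \<le> u" and s: "0 < s" and Qd: "Q = u^2+v^2"
  shows "- (2 * s) / g^2 \<le> (-2 * s * Q + 4 * s * (s+1) * v^2)/Q^2"
    and "(-2 * s * Q + 4 * s * (s+1) * v^2)/Q^2 \<le> 2 * s * (2 * s + 1) / (4 * g^2)"
proof -
  have u: "0 < u" using g by simp
  have Q: "0 < Q" using u Qd by (simp add: add_pos_nonneg)
  have gu: "g^2 \<le> u^2" using g by (intro power_mono) auto
  have gQ: "g^2 \<le> Q" using gu Qd zero_le_power2[of v] by linarith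
  have "- (2 * s) / g^2 \<le> - (2 * s) / Q"
    using divide_left_mono[OF gQ, of "2 * s"] g s Q by simp
  also have "- (2 * s) / Q = (-2 * s * Q)/Q^2" using Q by (simp add: power2_eq_square)
  also have "\<dots> \<le> (-2 * s * Q + 4 * s * (s+1) * v^2)/Q^2"
    using s by (intro divide_right_mono) auto
  finally show "- (2 * s) / g^2 \<le> (-2 * s * Q + 4 * s * (s+1) * v^2)/Q^2" .
  have "(-2 * s * Q + 4 * s * (s+1) * v^2)/Q^2 \<le> 2 * s * (2 * s + 1) / (4 * u^2)"
  proof (rule fle)
    have id: "2 * s * (2 * s + 1) * Q^2 - (-2 * s * Q + 4 * s * (s+1) * v^2) * (4 * u^2)
       = 2 * s * ((2 * s + 1) * (u^2 - v^2)^2 + 4 * u^2 * u^2)"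
      unfolding Qd by algebra
    have "0 \<le> 2 * s * ((2 * s + 1) * (u^2 - v^2)^2 + 4 * u^2 * u^2)"
      using s by (intro mult_nonneg_nonneg add_nonneg_nonneg) auto
    then show "(-2 * s * Q + 4 * s * (s+1) * v^2) * (4 * u^2) \<le> 2 * s * (2 * s + 1) * Q^2"
      using id by linarith
  qed (use Q u in auto)
  also have "\<dots> \<le> 2 * s * (2 * s + 1) / (4 * g^2)"
    using gu g s by (intro divide_left_mono) auto
  finally show "(-2 * s * Q + 4 * s * (s+1) * v^2)/Q^2 \<le> 2 * s * (2 * s + 1) / (4 * g^2)" .
qed

lemma ineq3: fixes g s u v Q :: real assumes g: "0 < g" "g \<le> u" and s: "0 < s" and Qd: "Q = u^2+v^2"
  shows "\<bar>(12 * s * (s+1) * v * Q - 8 * s * (s+1) * (s+2) * v^3)/Q^3\<bar>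
     \<le> 2 * s * (2 * s + 2) / g ^ 3 * max (25 * sqrt 5 / 72) ((2 * s + 1) / 8)"
proof -
  define K where "K = 25 * sqrt 5 / 72"
  define M where "M = max K ((2 * s + 1) / 8)"
  have u: "0 < u" using g by simp
  have Q: "0 < Q" using u Qd by (simp add: add_pos_nonneg)
  define N where "N = v * (3 * Q - 2 * (s+2) * v^2)"
  have K0: "0 \<le> K" unfolding K_def by simp
  have M0: "0 \<le> M" using K0 unfolding M_def by simp
  have main: "\<bar>N\<bar> * u^3 \<le> M * Q^3"
  proof (cases "0 \<le> 3 * Q - 2 * (s+2) * v^2")
    case True
    have "\<bar>N\<bar> = \<bar>v\<bar> * (3 * Q - 2 * (s+2) * v^2)" using True by (simp add: N_def abs_mult)
    also have "\<dots> \<le> \<bar>v\<bar> * (3 * u^2)"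
    proof (rule mult_left_mono)
      have "3 * v^2 \<le> 2 * (s+2) * v^2" using s by (intro mult_right_mono) auto
      then show "3 * Q - 2 * (s+2) * v^2 \<le> 3 * u^2" using Qd by simp
    qed simp
    finally have "\<bar>N\<bar> * u^3 \<le> \<bar>v\<bar> * (3 * u^2) * u^3" using u by (intro mult_right_mono) auto
    also have "\<dots> \<le> K * Q^3"
    proof (rule power2_le_imp_le)
      have "46656 * v^2 * (u^2)^5 \<le> 3125 * (v^2+u^2)^6" by (rule amgm) auto
      then have "46656 * v^2 * (u^2)^5 \<le> 3125 * Q^6" using Qd by (simp add: add.commute)
      moreover have "(\<bar>v\<bar> * (3 * u^2) * u^3)^2 = 9 * v^2 * (u^2)^5" by (simp add: power2_eq_square algebra_simps eval_nat_numeral)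
      moreover have "(K * Q^3)^2 = 3125/5184 * Q^6" unfolding K_def by (simp add: power2_eq_square algebra_simps eval_nat_numeral)
      ultimately show "(\<bar>v\<bar> * (3 * u^2) * u^3)^2 \<le> (K * Q^3)^2" by simp
      show "0 \<le> K * Q^3" using K0 Q by simp
    qed
    also have "\<dots> \<le> M * Q^3" using Q unfolding M_def by (intro mult_right_mono) auto
    finally show ?thesis .
  next
    case False
    define X where "X = 2 * (s+2) * v^2 - 3 * Q"
    have X: "0 \<le> X" using False X_def by simp
    have "\<bar>N\<bar> = \<bar>v\<bar> * X" using False by (simp add: N_def X_def abs_mult)
    then have "\<bar>N\<bar> * u^3 = (\<bar>v\<bar> * u) * (X * u^2)" by (simp add: algebra_simps eval_nat_numeral)
    also have "\<dots> \<le> (Q/2) * ((2 * s + 1) * Q^2 / 4)"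
    proof (rule mult_mono)
      show "\<bar>v\<bar> * u \<le> Q / 2" using key2[of v u] Qd by simp
      have id: "(2 * s + 1) * Q^2 - 4 * u^2 * X = (2 * s + 1) * (u^2 - v^2)^2 + 12 * u^2 * u^2"
        unfolding X_def Qd by algebra
      have "0 \<le> (2 * s + 1) * (u^2 - v^2)^2 + 12 * u^2 * u^2" using s by (intro add_nonneg_nonneg mult_nonneg_nonneg) auto
      then have "4 * u^2 * X \<le> (2 * s + 1) * Q^2" using id by linarith
      then have "(4 * u^2 * X)/4 \<le> (2 * s + 1) * Q^2 / 4" by (rule divide_right_mono) simp
      then show "X * u^2 \<le> (2 * s + 1) * Q^2 / 4" by (simp add: mult.commute)
      show "0 \<le> Q / 2" using Q by simp
      show "0 \<le> X * u^2" using X by simp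
    qed
    also have "\<dots> = (2 * s + 1) / 8 * Q^3" by (simp add: eval_nat_numeral)
    also have "\<dots> \<le> M * Q^3" using Q unfolding M_def by (intro mult_right_mono) auto
    finally show ?thesis .
  qed
  have "\<bar>(12 * s * (s+1) * v * Q - 8 * s * (s+1) * (s+2) * v^3)/Q^3\<bar> = 4 * s * (s+1) * \<bar>N\<bar> / Q^3"
  proof -
    have "12 * s * (s+1) * v * Q - 8 * s * (s+1) * (s+2) * v^3 = 4 * s * (s+1) * N"
      unfolding N_def by (simp add: algebra_simps eval_nat_numeral)
    then show ?thesis using s Q by (simp add: abs_mult abs_divide)
  qed
  also have "\<dots> \<le> 4 * s * (s+1) * M / u^3"
  proof (rule fle)
    show "4 * s * (s+1) * \<bar>N\<bar> * u^3 \<le> 4 * s * (s+1) * M * Q^3"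
      using mult_left_mono[OF main, of "4 * s * (s+1)"] s by (simp add: algebra_simps)
  qed (use Q u in auto)
  also have "\<dots> \<le> 4 * s * (s+1) * M / g^3"
    using g s M0 by (intro divide_left_mono power_mono mult_pos_pos) auto
  also have "\<dots> = 2 * s * (2 * s + 2) / g ^ 3 * max (25 * sqrt 5 / 72) ((2 * s + 1) / 8)"
    unfolding M_def K_def by (simp add: algebra_simps)
  finally show ?thesis .
qed

lemma ineq4: fixes g s u v Q :: real assumes g: "0 < g" "g \<le> u" and s: "0 < s" and Qd: "Q = u^2+v^2"
  shows "- (2 * s * (s + 1) * (2 * s + 2) * 3) / g ^ 4 \<le>
     (12 * s * (s+1) * Q^2 - 48 * s * (s+1) * (s+2) * v^2 * Q + 16 * s * (s+1) * (s+2) * (s+3) * v^4)/Q^4"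
    and "(12 * s * (s+1) * Q^2 - 48 * s * (s+1) * (s+2) * v^2 * Q + 16 * s * (s+1) * (s+2) * (s+3) * v^4)/Q^4
     \<le> 2 * s * (2 * s + 1) * (2 * s + 2) * (2 * s + 3) / g ^ 4"
proof -
  have u: "0 < u" using g by simp
  have Q: "0 < Q" using u Qd by (simp add: add_pos_nonneg)
  have gu: "g^2 \<le> u^2" using g by (intro power_mono) auto
  have gQ: "g^2 \<le> Q" using gu Qd zero_le_power2[of v] by linarith
  have g4: "g^4 \<le> Q^2"
  proof -
    have "(g^2)^2 \<le> Q^2" using gQ g by (intro power_mono) auto
    then show ?thesis by (simp add: power_mult[symmetric])
  qed
  define N where "N = 3 * Q^2 - 12 * (s+2) * v^2 * Q + 4 * (s+2) * (s+3) * v^4"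
  have num: "12 * s * (s+1) * Q^2 - 48 * s * (s+1) * (s+2) * v^2 * Q + 16 * s * (s+1) * (s+2) * (s+3) * v^4
     = 4 * s * (s+1) * N" unfolding N_def by (simp add: algebra_simps)
  have c0: "0 < 4 * s * (s+1)" using s by simp
  have Nlow: "- (3 * (s+1) * Q^2) \<le> N"
  proof -
    have id: "(s+3) * (N + 3 * (s+1) * Q^2) = (s+2) * ((3 * Q - 2 * (s+3) * v^2)^2 + 3 * s * Q^2)"
      unfolding N_def by algebra
    have "0 \<le> (s+2) * ((3 * Q - 2 * (s+3) * v^2)^2 + 3 * s * Q^2)"
      using s by (intro mult_nonneg_nonneg add_nonneg_nonneg) auto
    then have "0 \<le> (s+3) * (N + 3 * (s+1) * Q^2)" using id by simp
    then have "0 \<le> N + 3 * (s+1) * Q^2" using s by (simp add: zero_le_mult_iff)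
    then show ?thesis by simp
  qed
  have Nup: "N \<le> (2 * s + 1) * (2 * s + 3) * Q^2"
  proof -
    have id: "(2 * s + 1) * (2 * s + 3) * Q^2 - N = 4 * (s+2) * (s+3) * u^2 * v^2 + 4 * s * (s+2) * u^2 * Q"
      unfolding N_def Qd by algebra
    have "0 \<le> 4 * (s+2) * (s+3) * u^2 * v^2 + 4 * s * (s+2) * u^2 * Q"
      using s Q by (intro add_nonneg_nonneg mult_nonneg_nonneg) auto
    then show ?thesis using id by simp
  qed
  have "- (2 * s * (s + 1) * (2 * s + 2) * 3) / g ^ 4 \<le> - (12 * s * (s+1)^2) / Q^2"
  proof -
    have "(12 * s * (s+1)^2) / Q^2 \<le> (12 * s * (s+1)^2) / g^4"
      using g4 g s Q by (intro divide_left_mono) auto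
    moreover have "- (2 * s * (s + 1) * (2 * s + 2) * 3) / g ^ 4 = - ((12 * s * (s+1)^2) / g^4)"
    proof -
      have eq: "2 * s * (s + 1) * (2 * s + 2) * 3 = 12 * s * (s+1)^2" by (simp add: power2_eq_square algebra_simps)
      show ?thesis by (simp only: eq divide_minus_left)
    qed
    moreover have "- (12 * s * (s+1)^2) / Q^2 = - ((12 * s * (s+1)^2) / Q^2)"
      by (simp only: divide_minus_left)
    ultimately show ?thesis by linarith
  qed
  also have "\<dots> \<le> 4 * s * (s+1) * N / Q^4"
  proof (rule fle)
    have A: "4 * s * (s+1) * (- (3 * (s+1) * Q^2)) \<le> 4 * s * (s+1) * N"
      using mult_left_mono[OF Nlow, of "4 * s * (s+1)"] c0 by simp
    have A2: "4 * s * (s+1) * (- (3 * (s+1) * Q^2)) * Q^2 \<le> 4 * s * (s+1) * N * Q^2"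
      by (rule mult_right_mono[OF A]) simp
    have eq: "- (12 * s * (s+1)^2) * Q^4 = 4 * s * (s+1) * (- (3 * (s+1) * Q^2)) * Q^2"
      by (simp add: algebra_simps power2_eq_square eval_nat_numeral)
    show "- (12 * s * (s+1)^2) * Q^4 \<le> 4 * s * (s+1) * N * Q^2"
      unfolding eq by (rule A2)
  qed (use Q in auto)
  finally show "- (2 * s * (s + 1) * (2 * s + 2) * 3) / g ^ 4 \<le>
     (12 * s * (s+1) * Q^2 - 48 * s * (s+1) * (s+2) * v^2 * Q + 16 * s * (s+1) * (s+2) * (s+3) * v^4)/Q^4"
    unfolding num .
  have "4 * s * (s+1) * N / Q^4 \<le> 4 * s * (s+1) * ((2 * s + 1) * (2 * s + 3)) / Q^2"
  proof (rule fle)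
    have "4 * s * (s+1) * N \<le> 4 * s * (s+1) * ((2 * s + 1) * (2 * s + 3) * Q^2)"
      using mult_left_mono[OF Nup, of "4 * s * (s+1)"] c0 by simp
    from mult_right_mono[OF this, of "Q^2"]
    show "4 * s * (s+1) * N * Q^2 \<le> 4 * s * (s+1) * ((2 * s + 1) * (2 * s + 3)) * Q^4"
      by (simp add: algebra_simps eval_nat_numeral)
  qed (use Q in auto)
  also have "\<dots> \<le> 4 * s * (s+1) * ((2 * s + 1) * (2 * s + 3)) / g^4"
    using g4 g s Q by (intro divide_left_mono) auto
  also have "\<dots> = 2 * s * (2 * s + 1) * (2 * s + 2) * (2 * s + 3) / g ^ 4"
    by (simp add: algebra_simps)
  finally show "(12 * s * (s+1) * Q^2 - 48 * s * (s+1) * (s+2) * v^2 * Q + 16 * s * (s+1) * (s+2) * (s+3) * v^4)/Q^4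
     \<le> 2 * s * (2 * s + 1) * (2 * s + 2) * (2 * s + 3) / g ^ 4"
    unfolding num .
qed


theorem lemma5p7:
  fixes \<gamma> s u v :: real
  assumes "\<gamma> > 0" and "s > 0" and "u \<ge> \<gamma>"
  shows "(\<bar>D2 1 u v s\<bar> / G u v s \<le> s / \<gamma>) \<and>
      (- (2 * s) / \<gamma>\<^sup>2 \<le> D2 2 u v s / G u v s) \<and>
      (D2 2 u v s / G u v s \<le> 2 * s * (2 * s + 1) / (4 * \<gamma>\<^sup>2)) \<and>
      (\<bar>D2 3 u v s\<bar> / G u v s
           \<le> 2 * s * (2 * s + 2) / \<gamma> ^ 3 * max (25 * sqrt 5 / 72) ((2 * s + 1) / 8)) \<and>
      (- (2 * s * (s + 1) * (2 * s + 2) * 3) / \<gamma> ^ 4 \<le> D2 4 u v s / G u v s) \<and>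
      (D2 4 u v s / G u v s \<le> 2 * s * (2 * s + 1) * (2 * s + 2) * (2 * s + 3) / \<gamma> ^ 4)"
proof -
  have u0: "u \<noteq> 0" using assms by simp
  have Gpos: "0 < G u v s" using Qpos[OF u0, of v] u0 by (simp add: G_def)
  have a1: "\<bar>D2 1 u v s\<bar> / G u v s = \<bar>D2 1 u v s / G u v s\<bar>" using Gpos by (simp add: abs_divide)
  have a3: "\<bar>D2 3 u v s\<bar> / G u v s = \<bar>D2 3 u v s / G u v s\<bar>" using Gpos by (simp add: abs_divide)
  note R = ratios[OF u0, of v s]
  note I2 = ineq2[OF assms(1) assms(3) assms(2) refl, of v]
  note I4 = ineq4[OF assms(1) assms(3) assms(2) refl, of v]
  show ?thesis
    unfolding a1 a3 R
    using ineq1[OF assms(1) assms(3) assms(2), of v] I2 I4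
      ineq3[OF assms(1) assms(3) assms(2) refl, of v]
    by (intro conjI) auto
qed

end
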